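(* Let $R$ be a ring such that $\mathrm{char}(R)$ is finite and $J(R)$ is nil of bounded index. If the group $U(R/J(R))$ has finite exponent, then so does $U(R)$. If additionally $R/J(R)$ is clean, then $R$ is $n$-torsion clean for some $n\in\mathbb{N}$.
   Context: All rings are associative with identity; $\mathrm{char}(R):=|1\cdot\mathbb{Z}|$, $J(R)$ is the Jacobson radical, $U(\cdot)$ the unit group. An ideal $I$ is nil of bounded index if there is $k$ with $r^k=0$ for all $r\in I$. A ring is clean if every element is a sum of an idempotent and a unit. A ring $R$ is $n$-torsion clean if every $r\in R$ can be written $r=e+u$ with $e^2=e$, $u$ a unit, $u^n=1$, and $n$ is the smallest natural number with this property. *)

theory Defs
  imports "HOL-Algebra.Algebra"
begin

definition left_ideal :: "('a, 'b) ring_scheme \<Rightarrow> 'a set \<Rightarrow> bool" where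
  "left_ideal R I \<longleftrightarrow> additive_subgroup I R \<and>
     (\<forall>r \<in> carrier R. \<forall>x \<in> I. r \<otimes>\<^bsub>R\<^esub> x \<in> I)"

definition maximal_left_ideal :: "('a, 'b) ring_scheme \<Rightarrow> 'a set \<Rightarrow> bool" where
  "maximal_left_ideal R I \<longleftrightarrow> left_ideal R I \<and> I \<noteq> carrier R \<and>
     (\<forall>K. left_ideal R K \<and> I \<subseteq> K \<and> K \<noteq> carrier R \<longrightarrow> K = I)"

definition jacobson :: "('a, 'b) ring_scheme \<Rightarrow> 'a set" where
  "jacobson R = carrier R \<inter> \<Inter> {I. maximal_left_ideal R I}"

text \<open>char(R) = |1 Z| is finite.\<close>
definition finite_char :: "('a, 'b) ring_scheme \<Rightarrow> bool" where
  "finite_char R \<longleftrightarrow> finite {add_pow R (k::int) \<one>\<^bsub>R\<^esub> | k. True}"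

definition nil_bounded_index :: "('a, 'b) ring_scheme \<Rightarrow> 'a set \<Rightarrow> bool" where
  "nil_bounded_index R I \<longleftrightarrow> (\<exists>k::nat. \<forall>r \<in> I. r [^]\<^bsub>R\<^esub> k = \<zero>\<^bsub>R\<^esub>)"

definition units_finite_exponent :: "('a, 'b) ring_scheme \<Rightarrow> bool" where
  "units_finite_exponent R \<longleftrightarrow>
     (\<exists>n::nat. n > 0 \<and> (\<forall>u \<in> Units R. u [^]\<^bsub>R\<^esub> n = \<one>\<^bsub>R\<^esub>))"

definition clean :: "('a, 'b) ring_scheme \<Rightarrow> bool" where
  "clean R \<longleftrightarrow> (\<forall>r \<in> carrier R. \<exists>e u. e \<in> carrier R \<and> e \<otimes>\<^bsub>R\<^esub> e = e \<and>
      u \<in> Units R \<and> r = e \<oplus>\<^bsub>R\<^esub> u)"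

definition torsion_clean_prop :: "('a, 'b) ring_scheme \<Rightarrow> nat \<Rightarrow> bool" where
  "torsion_clean_prop R n \<longleftrightarrow> n > 0 \<and>
     (\<forall>r \<in> carrier R. \<exists>e u. e \<in> carrier R \<and> e \<otimes>\<^bsub>R\<^esub> e = e \<and>
        u \<in> Units R \<and> u [^]\<^bsub>R\<^esub> n = \<one>\<^bsub>R\<^esub> \<and> r = e \<oplus>\<^bsub>R\<^esub> u)"

definition torsion_clean :: "('a, 'b) ring_scheme \<Rightarrow> nat \<Rightarrow> bool" where
  "torsion_clean R n \<longleftrightarrow> torsion_clean_prop R n \<and> (\<forall>m < n. \<not> torsion_clean_prop R m)"

end

theory Submission
  imports Defs
begin

lemma (in cring) unip_step:
  assumes j: "j \<in> carrier R"
  shows "\<exists>s\<in>carrier R. (\<one> \<oplus> j) [^] (m::nat) = \<one> \<oplus> add_pow R m j \<oplus> j \<otimes> j \<otimes> s"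
proof (induction m)
  case 0
  show ?case using j by (intro bexI[of _ \<zero>]) auto
next
  case (Suc m)
  then obtain s where s: "s \<in> carrier R" "(\<one> \<oplus> j) [^] m = \<one> \<oplus> add_pow R m j \<oplus> j \<otimes> j \<otimes> s" by blast
  define xx where "xx = add_pow R m j"
  define yy where "yy = add_pow R m \<one>"
  have xy: "xx \<in> carrier R" "yy \<in> carrier R" using j by (auto simp: xx_def yy_def)
  have eq: "xx \<otimes> j = j \<otimes> j \<otimes> yy"
    using j unfolding xx_def yy_def
    by (simp add: add_pow_ldistr add_pow_rdistr)
  have "(\<one> \<oplus> j) [^] Suc m = (\<one> \<oplus> xx \<oplus> j \<otimes> j \<otimes> s) \<otimes> (\<one> \<oplus> j)"
    using s xx_def by simp
  also have "\<dots> = \<one> \<oplus> xx \<oplus> j \<oplus> j \<otimes> j \<otimes> s \<oplus> j \<otimes> j \<otimes> j \<otimes> s \<oplus> xx \<otimes> j"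
    using xy s j by algebra
  also have "\<dots> = \<one> \<oplus> (xx \<oplus> j) \<oplus> j \<otimes> j \<otimes> (s \<oplus> j \<otimes> s \<oplus> yy)"
    unfolding eq using xy s j by algebra
  also have "xx \<oplus> j = add_pow R (Suc m) j" unfolding xx_def using j by (simp add: add.nat_pow_Suc)
  finally show ?case using xy s j by (intro bexI[of _ "s \<oplus> j \<otimes> s \<oplus> yy"]) auto
qed

lemma (in cring) unip_c:
  assumes j: "j \<in> carrier R" and c: "add_pow R (c::nat) \<one> = \<zero>"
  shows "\<exists>s\<in>carrier R. (\<one> \<oplus> j) [^] c = \<one> \<oplus> j \<otimes> j \<otimes> s"
proof -
  obtain s where s: "s \<in> carrier R" "(\<one> \<oplus> j) [^] c = \<one> \<oplus> add_pow R c j \<oplus> j \<otimes> j \<otimes> s"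
    using unip_step[OF j] by blast
  have "add_pow R c j = \<zero>"
    using add_pow_ldistr[of \<one> j c] j c by simp
  thus ?thesis using s j by auto
qed

lemma (in cring) unip_iter:
  assumes j: "j \<in> carrier R" and c: "add_pow R (c::nat) \<one> = \<zero>"
  shows "\<exists>w\<in>carrier R. (\<one> \<oplus> j) [^] (c ^ m) = \<one> \<oplus> j [^] ((2::nat) ^ m) \<otimes> w"
proof (induction m)
  case 0
  then show ?case using j by (intro bexI[of _ \<one>]) auto
next
  case (Suc m)
  then obtain w where w: "w \<in> carrier R" "(\<one> \<oplus> j) [^] (c ^ m) = \<one> \<oplus> j [^] ((2::nat) ^ m) \<otimes> w"
    by blast
  define q where "q = j [^] ((2::nat) ^ m) \<otimes> w"
  have q: "q \<in> carrier R" using j w by (simp add: q_def)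
  obtain s where s: "s \<in> carrier R" "(\<one> \<oplus> q) [^] c = \<one> \<oplus> q \<otimes> q \<otimes> s"
    using unip_c[OF q c] by blast
  have "(\<one> \<oplus> j) [^] (c ^ Suc m) = ((\<one> \<oplus> j) [^] (c ^ m)) [^] c"
    using j by (simp add: nat_pow_pow mult.commute)
  also have "\<dots> = \<one> \<oplus> q \<otimes> q \<otimes> s" using w s q_def by simp
  also have "q \<otimes> q \<otimes> s = (j [^] ((2::nat) ^ m) \<otimes> j [^] ((2::nat) ^ m)) \<otimes> (w \<otimes> w \<otimes> s)"
    unfolding q_def using j w s by (simp add: m_ac)
  also have "j [^] ((2::nat) ^ m) \<otimes> j [^] ((2::nat) ^ m) = j [^] ((2::nat) ^ Suc m)"
    using j by (simp add: nat_pow_mult mult_2)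
  finally show ?case using w s by auto
qed

lemma (in cring) unipotent:
  assumes j: "j \<in> carrier R" and c: "add_pow R (c::nat) \<one> = \<zero>" and k: "j [^] (k::nat) = \<zero>"
  shows "(\<one> \<oplus> j) [^] (c ^ k) = \<one>"
proof -
  obtain w where w: "w \<in> carrier R" "(\<one> \<oplus> j) [^] (c ^ k) = \<one> \<oplus> j [^] ((2::nat) ^ k) \<otimes> w"
    using unip_iter[OF j c] by blast
  have "k \<le> 2 ^ k" using less_exp[of k] by simp
  then have "j [^] ((2::nat) ^ k) = j [^] k \<otimes> j [^] ((2::nat) ^ k - k)"
    using j by (simp add: nat_pow_mult)
  also have "\<dots> = \<zero>" using k j by simp
  finally show ?thesis using w by simp
qed

lemma (in cring) t1: "x \<in> carrier R \<Longrightarrow> x \<oplus> x \<otimes> (\<ominus> (\<one> \<oplus> x \<oplus> x \<oplus> x \<oplus> x)) \<oplus> x \<otimes> x \<otimes> (\<one> \<oplus> x \<oplus> x \<oplus> x \<oplus> x)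
     = x \<otimes> x \<otimes> (x \<oplus> x \<oplus> x \<oplus> x \<ominus> \<one> \<ominus> \<one> \<ominus> \<one>)"
  by algebra
lemma (in cring) t2: "\<lbrakk>b \<in> carrier R; n \<in> carrier R; u \<in> carrier R\<rbrakk> \<Longrightarrow> (b \<oplus> n \<otimes> u) \<otimes> (b \<oplus> n \<otimes> u) \<ominus> (b \<oplus> n \<otimes> u) = (b \<otimes> b \<ominus> b) \<oplus> n \<otimes> (u \<otimes> (b \<oplus> b \<ominus> \<one>)) \<oplus> n \<otimes> n \<otimes> (u \<otimes> u)"
    by algebra
lemma (in cring) t3: "b \<in> carrier R \<Longrightarrow> (\<one> \<ominus> b \<ominus> b) \<otimes> (b \<oplus> b \<ominus> \<one>) = \<ominus> ((\<one> \<ominus> b \<ominus> b) \<otimes> (\<one> \<ominus> b \<ominus> b))"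
  by algebra
lemma (in cring) t4: "b \<in> carrier R \<Longrightarrow> (\<one> \<ominus> b \<ominus> b) \<otimes> (\<one> \<ominus> b \<ominus> b) = \<one> \<oplus> (b \<otimes> b \<ominus> b) \<oplus> (b \<otimes> b \<ominus> b) \<oplus> (b \<otimes> b \<ominus> b) \<oplus> (b \<otimes> b \<ominus> b)"
  by algebra
lemma (in cring) idem_ident:
  assumes b: "b \<in> carrier R"
  defines "n \<equiv> b \<otimes> b \<ominus> b" and "u \<equiv> \<one> \<ominus> b \<ominus> b"
  shows "(b \<oplus> n \<otimes> u) \<otimes> (b \<oplus> n \<otimes> u) \<ominus> (b \<oplus> n \<otimes> u) = n \<otimes> n \<otimes> (n \<oplus> n \<oplus> n \<oplus> n \<ominus> \<one> \<ominus> \<one> \<ominus> \<one>)"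
proof -
  have n: "n \<in> carrier R" and u: "u \<in> carrier R" using b by (auto simp: n_def u_def)
  show ?thesis unfolding t2[OF b n u] unfolding u_def t3[OF b] t4[OF b] using t1[OF n] unfolding n_def by simp
qed

lemma (in cring) idem_iter:
  assumes a: "a \<in> carrier R"
  shows "\<exists>b\<in>carrier R. \<exists>t\<in>carrier R. \<exists>w\<in>carrier R. b = a \<oplus> (a \<otimes> a \<ominus> a) \<otimes> t \<and>
           b \<otimes> b \<ominus> b = (a \<otimes> a \<ominus> a) [^] ((2::nat) ^ m) \<otimes> w"
proof (induction m)
  case 0
  then show ?case using a by (intro bexI[of _ a] bexI[of _ \<zero>] bexI[of _ \<one>]) auto
next
  case (Suc m)
  define n0 where "n0 = a \<otimes> a \<ominus> a"
  have n0: "n0 \<in> carrier R" using a by (simp add: n0_def)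
  from Suc obtain b t w where bt: "b \<in> carrier R" "t \<in> carrier R" "w \<in> carrier R"
    "b = a \<oplus> n0 \<otimes> t" "b \<otimes> b \<ominus> b = n0 [^] ((2::nat) ^ m) \<otimes> w"
    unfolding n0_def by blast
  define n where "n = b \<otimes> b \<ominus> b"
  have n: "n \<in> carrier R" using bt(1) by (simp add: n_def)
  define b' where "b' = b \<oplus> n \<otimes> (\<one> \<ominus> b \<ominus> b)"
  note idI = idem_ident[OF bt(1)]
  have b': "b' \<in> carrier R" using bt(1) n by (simp add: b'_def)
  have "b' \<otimes> b' \<ominus> b' = n \<otimes> n \<otimes> (n \<oplus> n \<oplus> n \<oplus> n \<ominus> \<one> \<ominus> \<one> \<ominus> \<one>)"
    unfolding b'_def n_def by (rule idI)
  also have "n \<otimes> n = n0 [^] ((2::nat) ^ Suc m) \<otimes> (w \<otimes> w)"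
  proof -
    have "n \<otimes> n = (n0 [^] ((2::nat) ^ m) \<otimes> n0 [^] ((2::nat) ^ m)) \<otimes> (w \<otimes> w)"
      unfolding n_def bt(5) using bt(3) n0 by (simp add: m_ac)
    also have "n0 [^] ((2::nat) ^ m) \<otimes> n0 [^] ((2::nat) ^ m) = n0 [^] ((2::nat) ^ Suc m)"
      using n0 by (simp add: nat_pow_mult mult_2)
    finally show ?thesis .
  qed
  finally have e1: "b' \<otimes> b' \<ominus> b' = n0 [^] ((2::nat) ^ Suc m) \<otimes> (w \<otimes> w \<otimes> (n \<oplus> n \<oplus> n \<oplus> n \<ominus> \<one> \<ominus> \<one> \<ominus> \<one>))"
    using n0 bt(3) n by (simp add: m_assoc)
  have p: "(0::nat) < 2 ^ m" by simp
  define P where "P = n0 [^] ((2::nat) ^ m - 1)"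
  have P: "P \<in> carrier R" using n0 by (simp add: P_def)
  have "n0 [^] ((2::nat) ^ m) = n0 \<otimes> P"
    unfolding P_def using n0 p by (metis Suc_diff_1 nat_pow_Suc2)
  then have nn: "n = n0 \<otimes> P \<otimes> w" unfolding n_def bt(5) by simp
  have idn: "\<And>x y z u v. \<lbrakk>x \<in> carrier R; y \<in> carrier R; z \<in> carrier R; u \<in> carrier R; v \<in> carrier R\<rbrakk>
     \<Longrightarrow> x \<oplus> y \<otimes> z \<oplus> y \<otimes> u \<otimes> v = x \<oplus> y \<otimes> (z \<oplus> u \<otimes> v)" by algebra
  have e2: "b' = a \<oplus> n0 \<otimes> (t \<oplus> P \<otimes> (w \<otimes> (\<one> \<ominus> b \<ominus> b)))"
    unfolding b'_def nn bt(4) using idn[of a n0 t P "w \<otimes> (\<one> \<ominus> (a \<oplus> n0 \<otimes> t) \<ominus> (a \<oplus> n0 \<otimes> t))"] a n0 bt(2,3) P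
    by (simp add: m_assoc)
  have c1: "t \<oplus> P \<otimes> (w \<otimes> (\<one> \<ominus> b \<ominus> b)) \<in> carrier R" using bt(1-3) P by simp
  have c2: "w \<otimes> w \<otimes> (n \<oplus> n \<oplus> n \<oplus> n \<ominus> \<one> \<ominus> \<one> \<ominus> \<one>) \<in> carrier R" using bt(3) n by simp
  show ?case
    using e1 e2 b' c1 c2 unfolding n0_def by blast
qed

lemma (in cring) idem_lift:
  assumes a: "a \<in> carrier R" and k: "(a \<otimes> a \<ominus> a) [^] (k::nat) = \<zero>"
  shows "\<exists>b\<in>carrier R. \<exists>t\<in>carrier R. b = a \<oplus> (a \<otimes> a \<ominus> a) \<otimes> t \<and> b \<otimes> b = b"
proof -
  obtain b t w where bt: "b \<in> carrier R" "t \<in> carrier R" "w \<in> carrier R" "b = a \<oplus> (a \<otimes> a \<ominus> a) \<otimes> t"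
    "b \<otimes> b \<ominus> b = (a \<otimes> a \<ominus> a) [^] ((2::nat) ^ k) \<otimes> w"
    using idem_iter[OF a, of k] by blast
  have n0: "a \<otimes> a \<ominus> a \<in> carrier R" using a by simp
  have "k \<le> 2 ^ k" using less_exp[of k] by simp
  then have "(a \<otimes> a \<ominus> a) [^] ((2::nat) ^ k) = (a \<otimes> a \<ominus> a) [^] k \<otimes> (a \<otimes> a \<ominus> a) [^] ((2::nat) ^ k - k)"
    using n0 by (simp add: nat_pow_mult)
  also have "\<dots> = \<zero>" using k n0 by simp
  finally have "b \<otimes> b \<ominus> b = \<zero>" using bt(3,5) by simp
  then have "b \<otimes> b = b" using bt(1) by (simp add: r_right_minus_eq)
  thus ?thesis using bt by blast
qed

definition dcent :: "('a, 'b) ring_scheme \<Rightarrow> 'a \<Rightarrow> 'a set" where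
  "dcent R a = {y \<in> carrier R. \<forall>z\<in>carrier R. z \<otimes>\<^bsub>R\<^esub> a = a \<otimes>\<^bsub>R\<^esub> z \<longrightarrow> z \<otimes>\<^bsub>R\<^esub> y = y \<otimes>\<^bsub>R\<^esub> z}"

lemma (in ring) dcent_mem: "a \<in> carrier R \<Longrightarrow> a \<in> dcent R a"
  unfolding dcent_def by auto

lemma (in ring) dcent_subcring:
  assumes a: "a \<in> carrier R"
  shows "subcring (dcent R a) R"
proof (rule subcringI)
  show "subring (dcent R a) R"
  proof (rule subringI)
    show "dcent R a \<subseteq> carrier R" unfolding dcent_def by auto
    show "\<one> \<in> dcent R a" unfolding dcent_def by auto
    show "\<ominus> h \<in> dcent R a" if "h \<in> dcent R a" for h
      using that unfolding dcent_def by (auto simp: l_minus r_minus)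
    show "h1 \<otimes> h2 \<in> dcent R a" if "h1 \<in> dcent R a" "h2 \<in> dcent R a" for h1 h2
      using that unfolding dcent_def by (auto simp: m_assoc[symmetric]) (metis m_assoc)
    show "h1 \<oplus> h2 \<in> dcent R a" if "h1 \<in> dcent R a" "h2 \<in> dcent R a" for h1 h2
      using that unfolding dcent_def by (auto simp: l_distr r_distr)
  qed
  show "h1 \<otimes> h2 = h2 \<otimes> h1" if "h1 \<in> dcent R a" "h2 \<in> dcent R a" for h1 h2
  proof -
    have "h1 \<otimes> a = a \<otimes> h1" using that(1) a unfolding dcent_def by auto
    then show ?thesis using that unfolding dcent_def by auto
  qed
qed

lemma (in ring) sub_inv:
  assumes H: "subring H R" and x: "x \<in> H"
  shows "\<ominus>\<^bsub>R\<lparr>carrier := H\<rparr>\<^esub> x = \<ominus> x"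
proof -
  have rS: "ring (R\<lparr>carrier := H\<rparr>)" using subring_is_ring[OF H] .
  have "\<ominus> x \<in> H" using subringE(5)[OF H x] .
  moreover have "x \<in> carrier R" using subringE(1)[OF H] x by auto
  ultimately show ?thesis using abelian_group.minus_equality[OF ring.is_abelian_group[OF rS], of "\<ominus> x" x] x by (simp add: l_neg)
qed

lemma (in ring) sub_minus:
  assumes H: "subring H R" and x: "x \<in> H" and y: "y \<in> H"
  shows "x \<ominus>\<^bsub>R\<lparr>carrier := H\<rparr>\<^esub> y = x \<ominus> y"
  using sub_inv[OF H y] by (simp add: a_minus_def)

lemma sub_pow: "x [^]\<^bsub>R\<lparr>carrier := H\<rparr>\<^esub> (n::nat) = x [^]\<^bsub>R\<^esub> n"
  unfolding nat_pow_def by simp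

lemma sub_add_pow: "add_pow (R\<lparr>carrier := H\<rparr>) (n::nat) x = add_pow R n x"
  unfolding add_pow_def nat_pow_def by simp

lemma (in ring) unip:
  assumes j: "j \<in> carrier R" and c: "add_pow R (c::nat) \<one> = \<zero>" and k: "j [^] (k::nat) = \<zero>"
  shows "(\<one> \<oplus> j) [^] (c ^ k) = \<one>"
proof -
  let ?S = "R\<lparr>carrier := dcent R j\<rparr>"
  have cr: "cring ?S" using subcring_iff dcent_subcring[OF j] unfolding dcent_def by auto
  have "(\<one>\<^bsub>?S\<^esub> \<oplus>\<^bsub>?S\<^esub> j) [^]\<^bsub>?S\<^esub> (c ^ k) = \<one>\<^bsub>?S\<^esub>"
    by (rule cring.unipotent[OF cr]) (use dcent_mem[OF j] c k in \<open>simp_all add: sub_pow sub_add_pow\<close>)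
  then show ?thesis by (simp add: sub_pow)
qed

lemma (in ring) idem:
  assumes a: "a \<in> carrier R" and k: "(a \<otimes> a \<ominus> a) [^] (k::nat) = \<zero>"
  shows "\<exists>b\<in>carrier R. \<exists>t\<in>carrier R. b = a \<oplus> (a \<otimes> a \<ominus> a) \<otimes> t \<and> b \<otimes> b = b"
proof -
  let ?S = "R\<lparr>carrier := dcent R a\<rparr>"
  have sc: "subcring (dcent R a) R" using dcent_subcring[OF a] .
  have sr: "subring (dcent R a) R" using sc subcring.axioms(1) by blast
  have cr: "cring ?S" using subcring_iff sc unfolding dcent_def by auto
  have aa: "a \<in> dcent R a" using dcent_mem[OF a] .
  have aaa: "a \<otimes> a \<in> dcent R a" using subringE(6)[OF sr aa aa] .
  have mm: "a \<otimes> a \<ominus>\<^bsub>?S\<^esub> a = a \<otimes> a \<ominus> a" using sub_minus[OF sr aaa aa] .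
  have "\<exists>b\<in>carrier ?S. \<exists>t\<in>carrier ?S. b = a \<oplus>\<^bsub>?S\<^esub> (a \<otimes>\<^bsub>?S\<^esub> a \<ominus>\<^bsub>?S\<^esub> a) \<otimes>\<^bsub>?S\<^esub> t \<and> b \<otimes>\<^bsub>?S\<^esub> b = b"
    by (rule cring.idem_lift[OF cr]) (use aa k mm in \<open>simp_all add: sub_pow\<close>)
  then show ?thesis using mm subringE(1)[OF sr] by auto
qed

lemma (in ring) left_idealI:
  assumes "I \<subseteq> carrier R" "\<zero> \<in> I"
    and "\<And>x y. x \<in> I \<Longrightarrow> y \<in> I \<Longrightarrow> x \<oplus> y \<in> I"
    and "\<And>x. x \<in> I \<Longrightarrow> \<ominus> x \<in> I"
    and "\<And>r x. r \<in> carrier R \<Longrightarrow> x \<in> I \<Longrightarrow> r \<otimes> x \<in> I"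
  shows "left_ideal R I"
  unfolding left_ideal_def
  using assms by (auto intro!: additive_subgroupI add.subgroupI)

lemma (in ring) left_idealD:
  assumes "left_ideal R I"
  shows "I \<subseteq> carrier R" "\<zero> \<in> I"
    and "\<And>x y. x \<in> I \<Longrightarrow> y \<in> I \<Longrightarrow> x \<oplus> y \<in> I"
    and "\<And>x. x \<in> I \<Longrightarrow> \<ominus> x \<in> I"
    and "\<And>r x. r \<in> carrier R \<Longrightarrow> x \<in> I \<Longrightarrow> r \<otimes> x \<in> I"
  using assms unfolding left_ideal_def
  by (auto dest: additive_subgroup.a_subset additive_subgroup.zero_closed
      additive_subgroup.a_closed additive_subgroup.a_inv_closed)

lemma (in ring) colon_max:
  assumes M: "maximal_left_ideal R M" and r: "r \<in> carrier R" "r \<notin> M"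
  shows "maximal_left_ideal R {y \<in> carrier R. y \<otimes> r \<in> M}"
proof -
  let ?C = "{y \<in> carrier R. y \<otimes> r \<in> M}"
  have LM: "left_ideal R M" and MC: "M \<noteq> carrier R"
    and Mmax: "\<And>K. left_ideal R K \<Longrightarrow> M \<subseteq> K \<Longrightarrow> K \<noteq> carrier R \<Longrightarrow> K = M"
    using M unfolding maximal_left_ideal_def by auto
  note LMD = left_idealD[OF LM]
  have LC: "left_ideal R ?C"
  proof (rule left_idealI)
    show "?C \<subseteq> carrier R" by auto
    show "\<zero> \<in> ?C" using r LMD(2) by auto
    show "x \<oplus> y \<in> ?C" if "x \<in> ?C" "y \<in> ?C" for x y
      using that r LMD(3) by (auto simp: l_distr)
    show "\<ominus> x \<in> ?C" if "x \<in> ?C" for x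
      using that r LMD(4) by (auto simp: l_minus)
    show "s \<otimes> x \<in> ?C" if "s \<in> carrier R" "x \<in> ?C" for s x
      using that r LMD(5) by (auto simp: m_assoc)
  qed
  have "\<one> \<notin> ?C" using r by simp
  then have CC: "?C \<noteq> carrier R" using one_closed by blast
  have "K = ?C" if K: "left_ideal R K" "?C \<subseteq> K" "K \<noteq> carrier R" for K
  proof (rule ccontr)
    assume "K \<noteq> ?C"
    then obtain k where k: "k \<in> K" "k \<notin> ?C" using K(2) by blast
    note KD = left_idealD[OF K(1)]
    have kc: "k \<in> carrier R" using k KD(1) by auto
    have krM: "k \<otimes> r \<notin> M" using k kc by auto
    let ?L = "{k' \<otimes> r \<oplus> m | k' m. k' \<in> K \<and> m \<in> M}"
    have LL: "left_ideal R ?L"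
    proof (rule left_idealI)
      show "?L \<subseteq> carrier R" using KD(1) LMD(1) r by auto
      show "\<zero> \<in> ?L" using KD(2) LMD(2) r by (auto intro!: exI[of _ \<zero>])
      show "x \<oplus> y \<in> ?L" if xyL: "x \<in> ?L" "y \<in> ?L" for x y
      proof -
        obtain k1 m1 k2 m2 where ob: "x = k1 \<otimes> r \<oplus> m1" "y = k2 \<otimes> r \<oplus> m2" "k1 \<in> K" "m1 \<in> M" "k2 \<in> K" "m2 \<in> M"
          using xyL by blast
        have cc: "k1 \<in> carrier R" "k2 \<in> carrier R" "m1 \<in> carrier R" "m2 \<in> carrier R"
          using ob KD(1) LMD(1) by auto
        have "x \<oplus> y = (k1 \<oplus> k2) \<otimes> r \<oplus> (m1 \<oplus> m2)"
          unfolding ob(1,2) using cc r by (simp add: l_distr a_ac)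
        moreover have "k1 \<oplus> k2 \<in> K" "m1 \<oplus> m2 \<in> M" using ob KD(3) LMD(3) by auto
        ultimately show ?thesis by blast
      qed
      show "\<ominus> x \<in> ?L" if xL: "x \<in> ?L" for x
      proof -
        obtain k1 m1 where ob: "x = k1 \<otimes> r \<oplus> m1" "k1 \<in> K" "m1 \<in> M"
          using xL by blast
        have cc: "k1 \<in> carrier R" "m1 \<in> carrier R" using ob KD(1) LMD(1) by auto
        have "\<ominus> x = (\<ominus> k1) \<otimes> r \<oplus> (\<ominus> m1)"
          unfolding ob(1) using cc r by (simp add: l_minus minus_add)
        moreover have "\<ominus> k1 \<in> K" "\<ominus> m1 \<in> M" using ob KD(4) LMD(4) by auto
        ultimately show ?thesis by blast
      qed
      show "s \<otimes> x \<in> ?L" if sxL: "s \<in> carrier R" "x \<in> ?L" for s x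
      proof -
        obtain k1 m1 where ob: "x = k1 \<otimes> r \<oplus> m1" "k1 \<in> K" "m1 \<in> M"
          using sxL by blast
        have cc: "k1 \<in> carrier R" "m1 \<in> carrier R" using ob KD(1) LMD(1) by auto
        have "s \<otimes> x = (s \<otimes> k1) \<otimes> r \<oplus> (s \<otimes> m1)"
          unfolding ob(1) using cc r sxL(1) by (simp add: r_distr m_assoc)
        moreover have "s \<otimes> k1 \<in> K" "s \<otimes> m1 \<in> M" using ob sxL(1) KD(5) LMD(5) by auto
        ultimately show ?thesis by blast
      qed
    qed
    have MsubL: "M \<subseteq> ?L"
    proof
      fix m assume "m \<in> M"
      then have "m = \<zero> \<otimes> r \<oplus> m" using LMD(1) r by auto
      then show "m \<in> ?L" using \<open>m \<in> M\<close> KD(2) by blast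
    qed
    have "k \<otimes> r \<in> ?L"
    proof -
      have "k \<otimes> r = k \<otimes> r \<oplus> \<zero>" using kc r by simp
      then show ?thesis using k(1) LMD(2) by blast
    qed
    then have "?L \<noteq> M" using krM by blast
    then have "?L = carrier R" using Mmax[OF LL MsubL] by blast
    then have "r \<in> ?L" using r by auto
    then obtain k' m where km: "r = k' \<otimes> r \<oplus> m" "k' \<in> K" "m \<in> M" by blast
    have k'c: "k' \<in> carrier R" "m \<in> carrier R" using km KD(1) LMD(1) by auto
    have "(\<one> \<ominus> k') \<otimes> r = m"
    proof -
      have "(\<one> \<ominus> k') \<otimes> r = r \<ominus> k' \<otimes> r" using k'c r by (simp add: a_minus_def l_distr l_minus)
      also have "\<dots> = (k' \<otimes> r \<oplus> m) \<ominus> k' \<otimes> r"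
        using arg_cong[where f="\<lambda>x. x \<ominus> k' \<otimes> r", OF km(1)] .
      also have "\<dots> = m" using k'c r by (simp add: a_minus_def a_comm a_lcomm a_assoc r_neg)
      finally show ?thesis .
    qed
    then have "\<one> \<ominus> k' \<in> ?C" using km k'c by auto
    then have "\<one> \<ominus> k' \<in> K" using K(2) by blast
    then have "\<one> \<ominus> k' \<oplus> k' \<in> K" using KD(3) km(2) by blast
    then have "\<one> \<in> K" using k'c by (simp add: a_minus_def a_assoc l_neg)
    then have "K = carrier R"
    proof -
      assume one: "\<one> \<in> K"
      have "s \<in> K" if "s \<in> carrier R" for s
        using KD(5)[OF that one] that by simp
      then show ?thesis using KD(1) by blast
    qed
    then show False using K(3) by blast
  qed
  then show ?thesis unfolding maximal_left_ideal_def using LC CC by blast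
qed

lemma (in ring) jacobson_ideal: "ideal (jacobson R) R"
proof (rule idealI)
  show "ring R" by (rule ring_axioms)
  have maxD: "left_ideal R M" if "maximal_left_ideal R M" for M
    using that unfolding maximal_left_ideal_def by auto
  show "subgroup (jacobson R) (add_monoid R)"
  proof (rule add.subgroupI)
    show "jacobson R \<subseteq> carrier R" unfolding jacobson_def by auto
    show "jacobson R \<noteq> {}" unfolding jacobson_def using left_idealD(2)[OF maxD] by auto
    show "\<ominus> a \<in> jacobson R" if "a \<in> jacobson R" for a
      using that left_idealD(4)[OF maxD] unfolding jacobson_def by auto
    show "a \<oplus> b \<in> jacobson R" if "a \<in> jacobson R" "b \<in> jacobson R" for a b
      using that left_idealD(3)[OF maxD] unfolding jacobson_def by auto
  qed
  show "x \<otimes> a \<in> jacobson R" if "a \<in> jacobson R" "x \<in> carrier R" for a x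
    using that left_idealD(5)[OF maxD] unfolding jacobson_def by auto
  show "a \<otimes> x \<in> jacobson R" if a: "a \<in> jacobson R" and x: "x \<in> carrier R" for a x
  proof -
    have "a \<otimes> x \<in> M" if M: "maximal_left_ideal R M" for M
    proof (cases "x \<in> M")
      case True
      then show ?thesis using left_idealD(5)[OF maxD[OF M]] a unfolding jacobson_def by auto
    next
      case False
      have "a \<in> {y \<in> carrier R. y \<otimes> x \<in> M}"
        using a colon_max[OF M x False] unfolding jacobson_def by blast
      then show ?thesis by auto
    qed
    then show ?thesis using a x unfolding jacobson_def by auto
  qed
qed

lemma ring_add_lcancel:
  fixes S (structure)
  assumes "ring S" "a \<in> carrier S" "x \<in> carrier S" "y \<in> carrier S" "a \<oplus> x = a \<oplus> y"
  shows "x = y"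
proof -
  interpret ring S by fact
  show ?thesis using assms(2-5) add.l_cancel by blast
qed

lemma (in ring) char_nat:
  assumes "finite_char R"
  shows "\<exists>c::nat. c > 0 \<and> add_pow R c \<one> = \<zero>"
proof -
  let ?f = "\<lambda>k::int. add_pow R k \<one>"
  have "finite (range ?f)" using assms unfolding finite_char_def by (simp add: full_SetCompr_eq)
  then have "\<not> inj ?f" using finite_imageD infinite_UNIV_int by blast
  then obtain k1 k2 where kk: "k1 \<noteq> k2" "?f k1 = ?f k2" unfolding inj_def by blast
  have gen: "\<exists>c::nat. c > 0 \<and> add_pow R c \<one> = \<zero>" if "a < b" "?f a = ?f b" for a b
  proof -
    have "add_pow R (b - a) \<one> = add_pow R b \<one> \<oplus> \<ominus> add_pow R a \<one>"
      using add.int_pow_diff[of \<one> b a] by (simp add: a_minus_def)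
    also have "\<dots> = \<zero>" using that(2) by (simp add: r_neg)
    finally have z: "add_pow R (b - a) \<one> = \<zero>" .
    have "add_pow R (int (nat (b - a))) \<one> = add_pow R (nat (b - a)) \<one>"
      by (simp add: add_pow_def int_pow_int)
    then show ?thesis using z that(1) by (intro exI[of _ "nat (b - a)"]) auto
  qed
  show ?thesis
  proof (cases "k1 < k2")
    case True then show ?thesis using gen kk by blast
  next
    case False then have "k2 < k1" using kk(1) by simp
    then show ?thesis using gen kk by metis
  qed
qed

lemma (in ring) main_thm:
  assumes "True"
    and "finite_char R"
    and "nil_bounded_index R (jacobson R)"
    and "units_finite_exponent (R Quot (jacobson R))"
  shows "units_finite_exponent R \<and>
         (clean (R Quot (jacobson R)) \<longrightarrow> (\<exists>n. torsion_clean R n))"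
proof -
  let ?J = "jacobson R"
  let ?Q = "R Quot ?J"
  let ?h = "(+>) ?J"
  have I: "ideal ?J R" by (rule jacobson_ideal)
  interpret hh: ring_hom_ring R ?Q ?h using ideal.rcos_ring_hom_ring[OF I] .
  obtain c :: nat where c: "c > 0" "add_pow R c \<one> = \<zero>" using char_nat[OF assms(2)] by blast
  obtain k :: nat where k: "\<And>r. r \<in> ?J \<Longrightarrow> r [^] k = \<zero>"
    using assms(3) unfolding nil_bounded_index_def by blast
  obtain E :: nat where E: "E > 0" "\<And>U. U \<in> Units ?Q \<Longrightarrow> U [^]\<^bsub>?Q\<^esub> E = \<one>\<^bsub>?Q\<^esub>"
    using assms(4) unfolding units_finite_exponent_def by blast
  have Jc: "\<And>x. x \<in> ?J \<Longrightarrow> x \<in> carrier R" using ideal.Icarr[OF I] .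
  have U1: "(\<one> \<oplus> j) [^] (c ^ k) = \<one>" if "j \<in> ?J" for j
    using unip[OF Jc[OF that] c(2) k[OF that]] .
  have hc: "?h x \<in> carrier ?Q" if "x \<in> carrier R" for x using that by simp
  have heq: "x \<ominus> y \<in> ?J" if "x \<in> carrier R" "y \<in> carrier R" "?h x = ?h y" for x y
    using quotient_eq_iff_same_a_r_cos[OF I that(1,2)] that(3) by simp
  have lift1: "\<exists>j\<in>?J. x = \<one> \<oplus> j" if "x \<in> carrier R" "?h x = \<one>\<^bsub>?Q\<^esub>" for x
  proof -
    have "x \<ominus> \<one> \<in> ?J" using heq[OF that(1) one_closed] that(2) by simp
    moreover have "x = \<one> \<oplus> (x \<ominus> \<one>)" using that(1)
      by (simp add: a_minus_def a_comm a_lcomm r_neg)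
    ultimately show ?thesis by blast
  qed
  have hunit: "?h u \<in> Units ?Q" if "u \<in> Units R" for u
  proof -
    have uc: "u \<in> carrier R" "inv u \<in> carrier R" using that by auto
    have "?h u \<otimes>\<^bsub>?Q\<^esub> ?h (inv u) = \<one>\<^bsub>?Q\<^esub>" "?h (inv u) \<otimes>\<^bsub>?Q\<^esub> ?h u = \<one>\<^bsub>?Q\<^esub>"
      using uc that by (simp_all add: hh.hom_mult[symmetric])
    then show ?thesis unfolding Units_def using hc uc by blast
  qed
  define N where "N = E * c ^ k"
  have Npos: "N > 0" using E(1) c(1) by (simp add: N_def)
  have expo: "u [^] N = \<one>" if u: "u \<in> Units R" for u
  proof -
    have uc: "u \<in> carrier R" using u by auto
    have "?h (u [^] E) = (?h u) [^]\<^bsub>?Q\<^esub> E" using hh.hom_nat_pow[OF uc] .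
    also have "\<dots> = \<one>\<^bsub>?Q\<^esub>" using E(2)[OF hunit[OF u]] .
    finally obtain j where j: "j \<in> ?J" "u [^] E = \<one> \<oplus> j" using lift1[of "u [^] E"] uc by auto
    have "u [^] N = (u [^] E) [^] (c ^ k)" unfolding N_def using uc by (simp add: nat_pow_pow)
    also have "\<dots> = \<one>" using U1[OF j(1)] j(2) by simp
    finally show ?thesis .
  qed
  have part1: "units_finite_exponent R"
    unfolding units_finite_exponent_def using Npos expo by blast
  have unit_lift: "\<exists>j\<in>?J. \<exists>w\<in>carrier R. w \<otimes> x = \<one> \<and> x \<otimes> w = \<one>" if xx: "x \<in> carrier R" "?h x = \<one>\<^bsub>?Q\<^esub>" for x
  proof -
    obtain j where j: "j \<in> ?J" "x = \<one> \<oplus> j" using lift1[OF xx] by blast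
    have p: "c ^ k = Suc (c ^ k - 1)" using c(1) by simp
    have xc: "x \<in> carrier R" by fact
    have "x [^] (c ^ k) = \<one>" using U1[OF j(1)] j(2) by simp
    then have "x [^] (c ^ k - 1) \<otimes> x = \<one>" "x \<otimes> x [^] (c ^ k - 1) = \<one>"
      using xc p by (metis nat_pow_Suc, metis nat_pow_Suc2)
    then show ?thesis using j xc by (intro bexI[of _ j] bexI[of _ "x [^] (c ^ k - 1)"]) auto
  qed
  have part2: "\<exists>n. torsion_clean R n" if cl: "clean ?Q"
  proof -
    have tcp: "torsion_clean_prop R N"
      unfolding torsion_clean_prop_def
    proof (intro conjI ballI Npos)
      fix r assume r: "r \<in> carrier R"
      obtain e' U where eU: "e' \<in> carrier ?Q" "e' \<otimes>\<^bsub>?Q\<^esub> e' = e'" "U \<in> Units ?Q" "?h r = e' \<oplus>\<^bsub>?Q\<^esub> U"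
        using cl hc[OF r] unfolding clean_def by blast
      obtain a where a: "a \<in> carrier R" "e' = ?h a"
        using eU(1) unfolding FactRing_def A_RCOSETS_def'[of R ?J] by auto
      have "?h (a \<otimes> a) = ?h a" using eU(2) a by simp
      then have n0J: "a \<otimes> a \<ominus> a \<in> ?J" using heq a(1) by simp
      obtain b t where bt: "b \<in> carrier R" "t \<in> carrier R" "b = a \<oplus> (a \<otimes> a \<ominus> a) \<otimes> t" "b \<otimes> b = b"
        using idem[OF a(1) k[OF n0J]] by blast
      have ntJ: "(a \<otimes> a \<ominus> a) \<otimes> t \<in> ?J" using ideal.I_r_closed[OF I n0J bt(2)] .
      have n0c: "a \<otimes> a \<ominus> a \<in> carrier R" using a(1) by simp
      have "?h b = ?h a \<oplus>\<^bsub>?Q\<^esub> ?h ((a \<otimes> a \<ominus> a) \<otimes> t)" unfolding bt(3)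
        by (rule hh.hom_add) (use a(1) bt(2) n0c in simp_all)
      also have "?h ((a \<otimes> a \<ominus> a) \<otimes> t) = \<zero>\<^bsub>?Q\<^esub>"
        using a_rcos_zero[OF I ntJ] unfolding FactRing_def by simp
      finally have hb: "?h b = e'" using a hc[OF a(1)] by (simp del: hh.hom_add)
      define u where "u = r \<ominus> b"
      have uc: "u \<in> carrier R" using r bt(1) by (simp add: u_def)
      have rbu: "r = b \<oplus> u" unfolding u_def a_minus_def using r bt(1) a_lcomm[of b r "\<ominus> b"] r_neg[of b]
        by simp
      have "e' \<oplus>\<^bsub>?Q\<^esub> ?h u = e' \<oplus>\<^bsub>?Q\<^esub> U"
        using eU(4) rbu hb bt(1) uc by simp
      then have hu: "?h u = U"
        using ring_add_lcancel[OF ideal.quotient_is_ring[OF I] eU(1) hc[OF uc] hh.S.Units_closed[OF eU(3)]] by blast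
      obtain V where V: "V \<in> carrier ?Q" "U \<otimes>\<^bsub>?Q\<^esub> V = \<one>\<^bsub>?Q\<^esub>" "V \<otimes>\<^bsub>?Q\<^esub> U = \<one>\<^bsub>?Q\<^esub>"
        using eU(3) unfolding Units_def by blast
      obtain v where v: "v \<in> carrier R" "V = ?h v"
        using V(1) unfolding FactRing_def A_RCOSETS_def'[of R ?J] by auto
      have "?h (u \<otimes> v) = \<one>\<^bsub>?Q\<^esub>" "?h (v \<otimes> u) = \<one>\<^bsub>?Q\<^esub>" using V v hu uc by simp_all
      then obtain w1 w2 where w1: "w1 \<in> carrier R" "(u \<otimes> v) \<otimes> w1 = \<one>"
        and w2: "w2 \<in> carrier R" "w2 \<otimes> (v \<otimes> u) = \<one>"
        using unit_lift[of "u \<otimes> v"] unit_lift[of "v \<otimes> u"] uc v(1) by auto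
      have "w2 \<otimes> v = (w2 \<otimes> v) \<otimes> (u \<otimes> (v \<otimes> w1))" using w1 v(1) uc w2(1) by (simp add: m_assoc)
      also have "\<dots> = (w2 \<otimes> (v \<otimes> u)) \<otimes> (v \<otimes> w1)" using w1 v(1) uc w2(1) by (simp add: m_assoc)
      also have "\<dots> = v \<otimes> w1" using w2 v(1) w1(1) by simp
      finally have lr: "w2 \<otimes> v = v \<otimes> w1" .
      have "u \<in> Units R" unfolding Units_def
        using uc w1 w2 v(1) lr by (auto intro!: bexI[of _ "v \<otimes> w1"] simp: m_assoc[symmetric])
      then show "\<exists>e u. e \<in> carrier R \<and> e \<otimes> e = e \<and> u \<in> Units R \<and> u [^] N = \<one> \<and> r = e \<oplus> u"
        using bt(1,4) expo rbu by blast
    qed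
    define n where "n = (LEAST n. torsion_clean_prop R n)"
    have "torsion_clean_prop R n" unfolding n_def using tcp by (rule LeastI)
    moreover have "\<forall>m < n. \<not> torsion_clean_prop R m" unfolding n_def using not_less_Least by blast
    ultimately show ?thesis unfolding torsion_clean_def by blast
  qed
  show ?thesis using part1 part2 by blast
qed

theorem corollary2p11:
  fixes R :: "('a, 'b) ring_scheme"
  assumes "ring R"
    and "finite_char R"
    and "nil_bounded_index R (jacobson R)"
    and "units_finite_exponent (R Quot (jacobson R))"
  shows "units_finite_exponent R \<and>
         (clean (R Quot (jacobson R)) \<longrightarrow> (\<exists>n. torsion_clean R n))"
  using ring.main_thm[OF assms(1) TrueI assms(2-4)] .

end
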